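(* Let $X$ be a Banach space and let $A$ be a convex bounded subset of $X$. If $A$ endowed with the relative weak topology $\sigma(X,X^* )$ has a countable $\pi$-base, then $A$ is an SCD set.
   Context: A $\pi$-base of a topological space $T$ is a family of nonempty open sets such that every nonempty open subset of $T$ contains one of them. A slice of $A$ is $S(A,x^*,\varepsilon)=\{x\in A:\ \mathrm{Re}\,x^*(x)>\sup\mathrm{Re}\,x^*(A)-\varepsilon\}$. $A$ is an SCD set if there is a sequence $(S_n)$ of slices of $A$ such that $A\subseteq\overline{\mathrm{conv}}(B)$ for every $B\subseteq A$ intersecting every $S_n$. *)

theory Defs
  imports "HOL-Analysis.Analysis"
begin

definition weak_topology :: "'a::real_normed_vector topology" where
  "weak_topology = topology_generated_by
     {f -` V | f V. bounded_linear (f :: 'a \<Rightarrow> real) \<and> open V}"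

definition pi_base :: "'a topology \<Rightarrow> 'a set set \<Rightarrow> bool" where
  "pi_base T P \<longleftrightarrow> (\<forall>U\<in>P. openin T U \<and> U \<noteq> {}) \<and>
     (\<forall>V. openin T V \<and> V \<noteq> {} \<longrightarrow> (\<exists>U\<in>P. U \<subseteq> V))"

definition has_countable_pi_base :: "'a topology \<Rightarrow> bool" where
  "has_countable_pi_base T \<longleftrightarrow> (\<exists>P. countable P \<and> pi_base T P)"

definition slice :: "'a set \<Rightarrow> ('a \<Rightarrow> real) \<Rightarrow> real \<Rightarrow> 'a set" where
  "slice A f e = {x\<in>A. f x > Sup (f ` A) - e}"

definition SCD_set :: "'a::real_normed_vector set \<Rightarrow> bool" where
  "SCD_set A \<longleftrightarrow> (\<exists>(f :: nat \<Rightarrow> 'a \<Rightarrow> real) (e :: nat \<Rightarrow> real).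
     (\<forall>n. bounded_linear (f n) \<and> e n > 0) \<and>
     (\<forall>B. B \<subseteq> A \<and> (\<forall>n. B \<inter> slice A (f n) (e n) \<noteq> {}) \<longrightarrow>
          A \<subseteq> closure (convex hull B)))"

end

theory Submission
  imports Defs
begin


definition sublin :: "('a::real_vector \<Rightarrow> real) \<Rightarrow> bool" where
  "sublin p \<longleftrightarrow> (\<forall>x y. p (x+y) \<le> p x + p y) \<and> (\<forall>a x. 0 < a \<longrightarrow> p (a *\<^sub>R x) = a * p x)"

lemma sublin_zero: assumes "sublin p" shows "p 0 = 0"
proof -
  have "\<forall>a x. 0 < a \<longrightarrow> p (a *\<^sub>R x) = a * p x" using assms unfolding sublin_def by blast
  from this[rule_format, of 2 0] show ?thesis by simp
qed

lemma sublin_neg: assumes "sublin p" shows "0 \<le> p x + p (-x)"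
proof -
  have "p (x + -x) \<le> p x + p (-x)" using assms unfolding sublin_def by blast
  then show ?thesis using sublin_zero[OF assms] by simp
qed

lemma sublin_minimal_linear:
  fixes p :: "'a::real_vector \<Rightarrow> real"
  assumes sp: "sublin p"
    and mini: "\<And>p'. sublin p' \<Longrightarrow> (\<forall>x. p' x \<le> p x) \<Longrightarrow> p' = p"
  shows "p (x + y) = p x + p y" "p (a *\<^sub>R x) = a * p x"
proof -
  have add: "p (u+v) \<le> p u + p v" for u v using sp unfolding sublin_def by blast
  have hom: "0 < a \<Longrightarrow> p (a *\<^sub>R u) = a * p u" for a u using sp unfolding sublin_def by blast
  have p0: "p 0 = 0" by (rule sublin_zero[OF sp])
  have negp: "p (- y) = - p y" for y
  proof -
    define T where "T x = {p (x + t *\<^sub>R y) - t * p y | t. t \<ge> 0}" for x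
    define py where "py x = Inf (T x)" for x
    have Tne: "T x \<noteq> {}" for x unfolding T_def by auto
    have Tlow: "- p (-x) \<le> z" if zT: "z \<in> T x" for x z
    proof -
      obtain t where t: "t \<ge> 0" "z = p (x + t *\<^sub>R y) - t * p y" using zT by (auto simp: T_def)
      have "p (t *\<^sub>R y) \<le> p (x + t *\<^sub>R y) + p (-x)" using add[of "x + t *\<^sub>R y" "-x"] by simp
      moreover have "p (t *\<^sub>R y) = t * p y"
        using t(1) hom[of t y] p0 by (cases "t = 0") auto
      ultimately show ?thesis using t by simp
    qed
    have bdd: "bdd_below (T x)" for x using Tlow unfolding bdd_below_def by blast
    have pyle: "py x \<le> p (x + t *\<^sub>R y) - t * p y" if "t \<ge> 0" for x t
      unfolding py_def by (rule cInf_lower[OF _ bdd]) (use that in \<open>auto simp: T_def\<close>)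
    have pyge: "z \<le> py x" if "\<And>t. t \<ge> 0 \<Longrightarrow> z \<le> p (x + t *\<^sub>R y) - t * p y" for z x
      unfolding py_def by (rule cInf_greatest[OF Tne]) (use that in \<open>auto simp: T_def\<close>)
    have "sublin py"
      unfolding sublin_def
    proof (intro conjI allI impI)
      fix u v
      have "py (u+v) - py v \<le> p (u + t1 *\<^sub>R y) - t1 * p y" if t1: "t1 \<ge> 0" for t1
      proof -
        have "py (u+v) - (p (u + t1 *\<^sub>R y) - t1 * p y) \<le> p (v + t2 *\<^sub>R y) - t2 * p y" if t2: "t2 \<ge> 0" for t2
        proof -
          have "py (u+v) \<le> p ((u+v) + (t1+t2) *\<^sub>R y) - (t1+t2) * p y" using pyle t1 t2 by simp
          also have "(u+v) + (t1+t2) *\<^sub>R y = (u + t1 *\<^sub>R y) + (v + t2 *\<^sub>R y)" by (simp add: algebra_simps)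
          finally show ?thesis using add[of "u + t1 *\<^sub>R y" "v + t2 *\<^sub>R y"] by (simp add: algebra_simps)
        qed
        then have "py (u+v) - (p (u + t1 *\<^sub>R y) - t1 * p y) \<le> py v" by (intro pyge) auto
        then show ?thesis by simp
      qed
      then have "py (u+v) - py v \<le> py u" by (intro pyge) auto
      then show "py (u+v) \<le> py u + py v" by simp
    next
      fix a :: real and u assume a: "0 < a"
      have e1: "p (a *\<^sub>R u + t *\<^sub>R y) - t * p y = a * (p (u + (t/a) *\<^sub>R y) - (t/a) * p y)" for t
      proof -
        have "a *\<^sub>R u + t *\<^sub>R y = a *\<^sub>R (u + (t/a) *\<^sub>R y)" using a by (simp add: algebra_simps)
        then have "p (a *\<^sub>R u + t *\<^sub>R y) = a * p (u + (t/a) *\<^sub>R y)" using hom[OF a] by simp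
        then show ?thesis using a by (simp add: algebra_simps)
      qed
      have "py (a *\<^sub>R u) \<le> a * py u"
      proof -
        have "py (a *\<^sub>R u) / a \<le> p (u + s *\<^sub>R y) - s * p y" if "s \<ge> 0" for s
        proof -
          have "py (a *\<^sub>R u) \<le> p (a *\<^sub>R u + (a * s) *\<^sub>R y) - (a * s) * p y" using pyle a that by simp
          also have "\<dots> = a * (p (u + s *\<^sub>R y) - s * p y)" using e1[of "a * s"] a by simp
          finally show ?thesis using a by (simp add: field_simps mult.commute)
        qed
        then have "py (a *\<^sub>R u) / a \<le> py u" by (intro pyge) auto
        then show ?thesis using a by (simp add: field_simps mult.commute)
      qed
      moreover have "a * py u \<le> py (a *\<^sub>R u)"
      proof -
        have "a * py u \<le> p (a *\<^sub>R u + t *\<^sub>R y) - t * p y" if "t \<ge> 0" for t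
          using e1[of t] pyle[of "t/a" u] a that by simp
        then show ?thesis by (intro pyge) auto
      qed
      ultimately show "py (a *\<^sub>R u) = a * py u" by simp
    qed
    moreover have "\<forall>x. py x \<le> p x" using pyle[of 0] by simp
    ultimately have "py = p" by (rule mini)
    then have "p (-y) \<le> p (-y + 1 *\<^sub>R y) - 1 * p y" using pyle[of 1 "-y"] by simp
    then have "p (-y) \<le> - p y" using p0 by simp
    with sublin_neg[OF sp, of y] show ?thesis by simp
  qed
  show "p (x + y) = p x + p y"
  proof -
    have "p x = p ((x+y) + -y)" by simp
    also have "\<dots> \<le> p (x+y) + p (-y)" by (rule add)
    finally show ?thesis using add[of x y] negp[of y] by simp
  qed
  show "p (a *\<^sub>R x) = a * p x"
  proof (cases "a > 0")
    case True then show ?thesis by (rule hom)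
  next
    case False
    show ?thesis
    proof (cases "a = 0")
      case True then show ?thesis using p0 by simp
    next
      case False
      with \<open>\<not> a > 0\<close> have "-a > 0" by simp
      have "p (a *\<^sub>R x) = p (- ((-a) *\<^sub>R x))" by simp
      also have "\<dots> = - p ((-a) *\<^sub>R x)" by (rule negp)
      also have "\<dots> = a * p x" using hom[OF \<open>-a > 0\<close>] by simp
      finally show ?thesis .
    qed
  qed
qed

lemma exists_minimal_sublin:
  fixes q :: "'a::real_vector \<Rightarrow> real"
  assumes sq: "sublin q"
  shows "\<exists>p. sublin p \<and> (\<forall>x. p x \<le> q x) \<and> (\<forall>p'. sublin p' \<and> (\<forall>x. p' x \<le> p x) \<longrightarrow> p' = p)"
proof -
  define epi where "epi p = {(x, a). p x \<le> (a::real)}" for p :: "'a \<Rightarrow> real"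
  have epi_sub: "(\<forall>x. p' x \<le> p x) \<longleftrightarrow> epi p \<subseteq> epi p'" for p p'
  proof
    assume "\<forall>x. p' x \<le> p x" then show "epi p \<subseteq> epi p'" by (auto simp: epi_def intro: order_trans)
  next
    assume h: "epi p \<subseteq> epi p'"
    show "\<forall>x. p' x \<le> p x"
    proof
      fix x have "(x, p x) \<in> epi p" by (auto simp: epi_def)
      then show "p' x \<le> p x" using h by (auto simp: epi_def)
    qed
  qed
  have epi_inj: "p = p'" if "epi p = epi p'" for p p'
  proof
    fix x show "p x = p' x" using epi_sub[of p p'] epi_sub[where p=p and p'=p'] that by (metis antisym order_refl)
  qed
  define SS where "SS = {p. sublin p \<and> (\<forall>x. p x \<le> q x)}"
  define AA where "AA = epi ` SS"
  have "\<exists>M\<in>AA. \<forall>X\<in>AA. M \<subseteq> X \<longrightarrow> X = M"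
  proof (rule Zorn_Lemma2, intro ballI)
    fix C assume C: "C \<in> chains AA"
    then have CA: "C \<subseteq> AA" by (auto simp: chains_def)
    show "\<exists>U\<in>AA. \<forall>X\<in>C. X \<subseteq> U"
    proof (cases "C = {}")
      case True
      have "q \<in> SS" using sq by (auto simp: SS_def)
      then show ?thesis using True unfolding AA_def by blast
    next
      case False
      define Ch where "Ch = {p \<in> SS. epi p \<in> C}"
      have Chne: "Ch \<noteq> {}" using False CA unfolding AA_def Ch_def by auto
      have comp: "(\<forall>x. p1 x \<le> p2 x) \<or> (\<forall>x. p2 x \<le> p1 x)" if "p1 \<in> Ch" "p2 \<in> Ch" for p1 p2
        using chainsD[OF C, of "epi p1" "epi p2"] that epi_sub unfolding Ch_def by blast
      have chs: "sublin p" "\<forall>x. p x \<le> q x" if "p \<in> Ch" for p using that by (auto simp: Ch_def SS_def)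
      define m where "m x = Inf ((\<lambda>p. p x) ` Ch)" for x
      have low: "- q (-x) \<le> p x" if "p \<in> Ch" for p x
        using sublin_neg[OF chs(1)[OF that], of x] chs(2)[OF that, rule_format, of "-x"] by simp
      have bdd: "bdd_below ((\<lambda>p. p x) ` Ch)" for x using low unfolding bdd_below_def by blast
      have mle: "m x \<le> p x" if "p \<in> Ch" for p x
        unfolding m_def by (rule cInf_lower[OF _ bdd]) (use that in auto)
      have mge: "z \<le> m x" if "\<And>p. p \<in> Ch \<Longrightarrow> z \<le> p x" for z x
        unfolding m_def by (rule cInf_greatest) (use Chne that in auto)
      have "sublin m" unfolding sublin_def
      proof (intro conjI allI impI)
        fix u v
        have "m (u+v) - p1 u \<le> p2 v" if "p1 \<in> Ch" "p2 \<in> Ch" for p1 p2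
        proof -
          have a1: "p (u+v) \<le> p u + p v" if "p \<in> Ch" for p using chs(1)[OF that] unfolding sublin_def by blast
          show ?thesis
          using comp[OF that] mle[OF that(1), of "u+v"] mle[OF that(2), of "u+v"] a1[OF that(1)] a1[OF that(2)]
          by (smt (verit))
        qed
        then have "m (u+v) - m v \<le> p1 u" if p1: "p1 \<in> Ch" for p1
        proof -
          have "m (u+v) - p1 u \<le> m v" by (rule mge) (use p1 \<open>\<And>p1 p2. p1 \<in> Ch \<Longrightarrow> p2 \<in> Ch \<Longrightarrow> m (u+v) - p1 u \<le> p2 v\<close> in blast)
          then show ?thesis by simp
        qed
        then have "m (u+v) - m v \<le> m u" using mge by blast
        then show "m (u+v) \<le> m u + m v" by simp
      next
        fix a :: real and u assume a: "0 < a"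
        have hp: "p (a *\<^sub>R u) = a * p u" if "p \<in> Ch" for p using chs(1)[OF that] a unfolding sublin_def by blast
        have "m (a *\<^sub>R u) / a \<le> p u" if "p \<in> Ch" for p
          using mle[OF that, of "a *\<^sub>R u"] hp[OF that] a by (simp add: field_simps mult.commute)
        then have "m (a *\<^sub>R u) / a \<le> m u" using mge by blast
        then have 1: "m (a *\<^sub>R u) \<le> a * m u" using a by (simp add: field_simps mult.commute)
        have "a * m u \<le> m (a *\<^sub>R u)"
        proof (rule mge)
          fix p assume "p \<in> Ch"
          then show "a * m u \<le> p (a *\<^sub>R u)" using mle[of p u] hp[of p] a by simp
        qed
        with 1 show "m (a *\<^sub>R u) = a * m u" by simp
      qed
      moreover have "\<forall>x. m x \<le> q x"
      proof
        fix x obtain p0 where "p0 \<in> Ch" using Chne by auto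
        then show "m x \<le> q x" using mle[of p0 x] chs(2)[of p0] by (meson order_trans)
      qed
      ultimately have "m \<in> SS" by (auto simp: SS_def)
      moreover have "X \<subseteq> epi m" if XC: "X \<in> C" for X
      proof -
        obtain p where "p \<in> SS" "X = epi p" using XC CA unfolding AA_def by auto
        then have "p \<in> Ch" using XC by (auto simp: Ch_def)
        then have "\<forall>x. m x \<le> p x" using mle by blast
        then show ?thesis using \<open>X = epi p\<close> epi_sub[where p=p and p'=m] by simp
      qed
      ultimately show ?thesis unfolding AA_def by (intro bexI[of _ "epi m"]) auto
    qed
  qed
  then obtain p where p: "p \<in> SS" "\<forall>X\<in>AA. epi p \<subseteq> X \<longrightarrow> X = epi p" unfolding AA_def by auto
  show ?thesis
  proof (intro exI conjI allI impI)
    show "sublin p" "\<And>x. p x \<le> q x" using p(1) by (auto simp: SS_def)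
    fix p' assume h: "sublin p' \<and> (\<forall>x. p' x \<le> p x)"
    then have "p' \<in> SS" using p(1) unfolding SS_def by (auto intro: order_trans)
    moreover have "epi p \<subseteq> epi p'" using h epi_sub[where p=p and p'=p'] by simp
    ultimately have "epi p' = epi p" using p(2) unfolding AA_def by simp
    then show "p' = p" by (rule epi_inj)
  qed
qed

lemma sublin_linear_below:
  fixes q :: "'a::real_vector \<Rightarrow> real"
  assumes "sublin q"
  shows "\<exists>g. (\<forall>x y. g (x+y) = g x + g y) \<and> (\<forall>a x. g (a *\<^sub>R x) = a * g x) \<and> (\<forall>x. g x \<le> q x)"
proof -
  obtain p where p: "sublin p" "\<forall>x. p x \<le> q x" "\<forall>p'. sublin p' \<and> (\<forall>x. p' x \<le> p x) \<longrightarrow> p' = p"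
    using exists_minimal_sublin[OF assms] by blast
  show ?thesis
    by (intro exI[of _ p]) (use sublin_minimal_linear[OF p(1)] p in auto)
qed

lemma HB_separation:
  fixes C :: "'a::real_normed_vector set"
  assumes cC: "convex C" and Cne: "C \<noteq> {}" and r: "0 < r"
    and far: "\<And>c. c \<in> C \<Longrightarrow> r \<le> norm (c - x)"
  shows "\<exists>g. bounded_linear g \<and> (\<forall>c\<in>C. g x + r \<le> g c)"
proof -
  define T where "T z = {norm (z + t *\<^sub>R (c - x)) - t * r | t c. t \<ge> 0 \<and> c \<in> C}" for z
  define q where "q z = Inf (T z)" for z
  have Tne: "T z \<noteq> {}" for z using Cne unfolding T_def by fastforce
  have Tlow: "- norm z \<le> w" if wT: "w \<in> T z" for z w
  proof -
    obtain t c where tc: "t \<ge> 0" "c \<in> C" "w = norm (z + t *\<^sub>R (c - x)) - t * r" using wT unfolding T_def by auto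
    have "t * r \<le> t * norm (c - x)" using far[OF tc(2)] tc(1) by (simp add: mult_left_mono)
    also have "\<dots> = norm (t *\<^sub>R (c - x))" using tc(1) by simp
    also have "\<dots> \<le> norm (z + t *\<^sub>R (c - x)) + norm z" by (metis add_diff_cancel_left' norm_triangle_ineq4 add.commute)
    finally show ?thesis using tc(3) by simp
  qed
  have bdd: "bdd_below (T z)" for z using Tlow unfolding bdd_below_def by blast
  have qle: "q z \<le> norm (z + t *\<^sub>R (c - x)) - t * r" if "t \<ge> 0" "c \<in> C" for z t c
    unfolding q_def by (rule cInf_lower[OF _ bdd]) (use that in \<open>auto simp: T_def\<close>)
  have qge: "w \<le> q z" if "\<And>t c. t \<ge> 0 \<Longrightarrow> c \<in> C \<Longrightarrow> w \<le> norm (z + t *\<^sub>R (c - x)) - t * r" for w z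
    unfolding q_def by (rule cInf_greatest[OF Tne]) (use that in \<open>auto simp: T_def\<close>)
  obtain c0 where c0: "c0 \<in> C" using Cne by auto
  have qnorm: "q z \<le> norm z" for z using qle[of 0 c0 z] c0 by simp
  have sq: "sublin q" unfolding sublin_def
  proof (intro conjI allI impI)
    fix u v
    have key: "q (u+v) \<le> (norm (u + t1 *\<^sub>R (c1 - x)) - t1 * r) + (norm (v + t2 *\<^sub>R (c2 - x)) - t2 * r)"
      if h: "t1 \<ge> 0" "c1 \<in> C" "t2 \<ge> 0" "c2 \<in> C" for t1 c1 t2 c2
    proof (cases "t1 + t2 = 0")
      case True
      then have "t1 = 0" "t2 = 0" using h by auto
      then show ?thesis using qnorm[of "u+v"] norm_triangle_ineq[of u v] by simp
    next
      case False
      then have tp: "t1 + t2 > 0" using h by auto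
      define c where "c = (t1/(t1+t2)) *\<^sub>R c1 + (t2/(t1+t2)) *\<^sub>R c2"
      have "c \<in> C" unfolding c_def
        by (rule convexD[OF cC h(2) h(4)]) (use h tp in \<open>auto simp: divide_simps\<close>)
      have eq: "(t1+t2) *\<^sub>R (c - x) = t1 *\<^sub>R (c1 - x) + t2 *\<^sub>R (c2 - x)"
      proof -
        have a1: "(t1+t2) * (t1/(t1+t2)) = t1" "(t1+t2) * (t2/(t1+t2)) = t2" using tp by auto
        have "(t1+t2) *\<^sub>R c = t1 *\<^sub>R c1 + t2 *\<^sub>R c2"
          unfolding c_def scaleR_add_right scaleR_scaleR a1 by simp
        then show ?thesis by (simp add: algebra_simps)
      qed
      have "q (u+v) \<le> norm ((u+v) + (t1+t2) *\<^sub>R (c - x)) - (t1+t2) * r"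
        using qle[of "t1+t2" c "u+v"] h \<open>c \<in> C\<close> by simp
      also have "(u+v) + (t1+t2) *\<^sub>R (c - x) = (u + t1 *\<^sub>R (c1 - x)) + (v + t2 *\<^sub>R (c2 - x))"
        using eq by (simp add: algebra_simps)
      finally show ?thesis using norm_triangle_ineq[of "u + t1 *\<^sub>R (c1 - x)" "v + t2 *\<^sub>R (c2 - x)"]
        by (simp add: algebra_simps)
    qed
    have "q (u+v) - (norm (u + t1 *\<^sub>R (c1 - x)) - t1 * r) \<le> q v" if h1: "t1 \<ge> 0" "c1 \<in> C" for t1 c1
    proof (rule qge)
      fix t :: real and c assume tc: "t \<ge> 0" "c \<in> C"
      show "q (u+v) - (norm (u + t1 *\<^sub>R (c1 - x)) - t1 * r) \<le> norm (v + t *\<^sub>R (c - x)) - t * r" using key[of t1 c1 t c] h1 tc by simp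
    qed
    then have "q (u+v) - q v \<le> q u" by (intro qge) (auto simp: algebra_simps)
    then show "q (u+v) \<le> q u + q v" by simp
  next
    fix a :: real and u assume a: "0 < a"
    have e1: "norm (a *\<^sub>R u + t *\<^sub>R (c - x)) - t * r = a * (norm (u + (t/a) *\<^sub>R (c - x)) - (t/a) * r)" for t c
    proof -
      have "a *\<^sub>R u + t *\<^sub>R (c - x) = a *\<^sub>R (u + (t/a) *\<^sub>R (c - x))" using a by (simp add: algebra_simps)
      then have "norm (a *\<^sub>R u + t *\<^sub>R (c - x)) = a * norm (u + (t/a) *\<^sub>R (c - x))" using a by simp
      then show ?thesis using a by (simp add: algebra_simps)
    qed
    have "q (a *\<^sub>R u) / a \<le> q u"
    proof (rule qge)
      fix s :: real and c assume sc: "s \<ge> 0" "c \<in> C"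
      have "q (a *\<^sub>R u) \<le> norm (a *\<^sub>R u + (a * s) *\<^sub>R (c - x)) - (a * s) * r" using qle a sc by simp
      also have "\<dots> = a * (norm (u + s *\<^sub>R (c - x)) - s * r)" using e1[of "a * s" c] a by simp
      finally show "q (a *\<^sub>R u) / a \<le> norm (u + s *\<^sub>R (c - x)) - s * r" using a by (simp add: field_simps mult.commute)
    qed
    then have 1: "q (a *\<^sub>R u) \<le> a * q u" using a by (simp add: field_simps mult.commute)
    have "a * q u \<le> q (a *\<^sub>R u)"
    proof (rule qge)
      fix t :: real and c assume tc: "t \<ge> 0" "c \<in> C"
      show "a * q u \<le> norm (a *\<^sub>R u + t *\<^sub>R (c - x)) - t * r"
        using e1[of t c] qle[of "t/a" c u] a tc by simp
    qed
    with 1 show "q (a *\<^sub>R u) = a * q u" by simp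
  qed
  obtain g where gadd: "\<And>x y. g (x+y) = g x + g y" and gsc: "\<And>a x. g (a *\<^sub>R x) = a * g x"
    and gq: "\<And>x. g x \<le> q x" using sublin_linear_below[OF sq] by blast
  have gn: "\<bar>g z\<bar> \<le> norm z" for z
  proof -
    have "g z \<le> norm z" using gq[of z] qnorm[of z] by simp
    moreover have "g (-z) \<le> norm z" using gq[of "-z"] qnorm[of "-z"] by simp
    moreover have "g (-z) = - g z" using gsc[of "-1" z] by simp
    ultimately show ?thesis by simp
  qed
  have bl: "bounded_linear g"
    by (rule bounded_linear_intro[where K=1]) (use gadd gsc gn in auto)
  have "g x + r \<le> g c" if "c \<in> C" for c
  proof -
    have "g (x - c) \<le> norm ((x - c) + 1 *\<^sub>R (c - x)) - 1 * r" using gq[of "x - c"] qle[of 1 c "x - c"] that by simp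
    then have "g (x - c) \<le> - r" by simp
    moreover have "g (x - c) = g x - g c" using gadd[of "x - c" c] by simp
    ultimately show ?thesis by simp
  qed
  then show ?thesis using bl by blast
qed



definition ipF :: "('a \<Rightarrow> real) set \<Rightarrow> 'a \<Rightarrow> 'a \<Rightarrow> real" where
  "ipF F x y = (\<Sum>f\<in>F. f x * f y)"

lemma ipF_sym: "ipF F x y = ipF F y x"
  unfolding ipF_def by (simp add: mult.commute)

lemma bl_mult_left: "bounded_linear (g :: 'a::real_normed_vector \<Rightarrow> real) \<Longrightarrow> bounded_linear (\<lambda>y. c * g y)"
  by (rule bounded_linear_compose[OF bounded_linear_mult_right])

lemma bl_add: "bounded_linear f \<Longrightarrow> f (x + y) = f x + f y"
  using bounded_linear.linear linear_add by blast
lemma bl_diff: "bounded_linear f \<Longrightarrow> f (x - y) = f x - f y"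
  using bounded_linear.linear linear_diff by blast
lemma bl_scale: "bounded_linear (f :: 'a::real_normed_vector \<Rightarrow> real) \<Longrightarrow> f (a *\<^sub>R x) = a * f x"
  using bounded_linear.linear linear_scale by fastforce
lemma bl_sum: "bounded_linear f \<Longrightarrow> f (sum g S) = (\<Sum>i\<in>S. f (g i))"
  using bounded_linear.linear linear_sum by blast

lemma ipF_bl:
  assumes "\<forall>f\<in>F. bounded_linear f"
  shows "bounded_linear (ipF F u)"
  unfolding ipF_def by (rule bounded_linear_sum) (use assms bl_mult_left in auto)

lemma ipF_diff_left:
  assumes "\<forall>f\<in>F. bounded_linear f"
  shows "ipF F (x - y) z = ipF F x z - ipF F y z"
  unfolding ipF_def using assms by (simp add: bl_diff left_diff_distrib sum_subtractf)

lemma ipF_add_left: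
  assumes "\<forall>f\<in>F. bounded_linear f"
  shows "ipF F (x + y) z = ipF F x z + ipF F y z"
  unfolding ipF_def using assms by (simp add: bl_add distrib_right sum.distrib)

lemma ipF_scale_left:
  fixes F :: "('a::real_normed_vector \<Rightarrow> real) set"
  assumes "\<forall>f\<in>F. bounded_linear f"
  shows "ipF F (a *\<^sub>R x) z = a * ipF F x z"
  unfolding ipF_def using assms by (simp add: bl_scale sum_distrib_left mult.assoc)

lemma ipF_diff_right:
  assumes "\<forall>f\<in>F. bounded_linear f"
  shows "ipF F z (x - y) = ipF F z x - ipF F z y"
  using ipF_diff_left[OF assms] ipF_sym by metis

lemma ipF_scale_right:
  fixes F :: "('a::real_normed_vector \<Rightarrow> real) set"
  assumes "\<forall>f\<in>F. bounded_linear f"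
  shows "ipF F z (a *\<^sub>R x) = a * ipF F z x"
  using ipF_scale_left[OF assms] ipF_sym by metis

lemma ipF_nonneg: "0 \<le> ipF F x x"
  unfolding ipF_def by (rule sum_nonneg) simp

lemma ipF_ge_sq:
  assumes "finite F" "f \<in> F"
  shows "(f x)\<^sup>2 \<le> ipF F x x"
  unfolding ipF_def power2_eq_square
  by (rule member_le_sum[where f="\<lambda>f. f x * f x"]) (use assms in auto)

lemma ipF_abs_less:
  assumes "finite F" "f \<in> F" "ipF F x x < d\<^sup>2" "0 < d"
  shows "\<bar>f x\<bar> < d"
proof -
  have "\<bar>f x\<bar>\<^sup>2 < d\<^sup>2" using ipF_ge_sq[OF assms(1,2), of x] assms(3) by simp
  then show ?thesis using assms(4) by (meson abs_ge_zero less_le power2_less_imp_less)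
qed

lemma ipF_expand:
  assumes "\<forall>f\<in>F. bounded_linear f"
  shows "ipF F (x - y) (x - y) = ipF F x x - 2 * ipF F x y + ipF F y y"
  using ipF_diff_left[OF assms] ipF_diff_right[OF assms] ipF_sym[of F x y] by simp

lemma bounded_funcs_on:
  fixes A :: "'a::real_normed_vector set" and F :: "('a \<Rightarrow> real) set"
  assumes "bounded A" "finite F" "\<forall>f\<in>F. bounded_linear f"
  shows "\<exists>M\<ge>0. \<forall>f\<in>F. \<forall>y\<in>A. \<bar>f y\<bar> \<le> M"
proof -
  have "\<forall>f\<in>F. \<exists>B. \<forall>y\<in>A. \<bar>f y\<bar> \<le> B"
  proof
    fix f assume "f \<in> F"
    then have "bounded (f ` A)" using bounded_linear_image assms by blast
    then obtain B where "\<forall>x\<in>f ` A. norm x \<le> B" unfolding bounded_iff by blast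
    then show "\<exists>B. \<forall>y\<in>A. \<bar>f y\<bar> \<le> B" by (auto simp: real_norm_def)
  qed
  then obtain B where B: "\<forall>f\<in>F. \<forall>y\<in>A. \<bar>f y\<bar> \<le> B f" by metis
  define M where "M = (\<Sum>f\<in>F. \<bar>B f\<bar>)"
  have "\<bar>B f\<bar> \<le> M" if "f \<in> F" for f
    unfolding M_def by (rule member_le_sum) (use that assms in auto)
  then have "\<forall>f\<in>F. \<forall>y\<in>A. \<bar>f y\<bar> \<le> M" using B by (meson abs_ge_self order_trans)
  moreover have "M \<ge> 0" unfolding M_def by (rule sum_nonneg) auto
  ultimately show ?thesis by blast
qed

lemma ipF_bound_on:
  fixes A :: "'a::real_normed_vector set"
  assumes "\<forall>f\<in>F. bounded_linear f" "M \<ge> 0" "\<forall>f\<in>F. \<forall>y\<in>A. \<bar>f y\<bar> \<le> M" "y \<in> A" "z \<in> A"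
  shows "\<bar>ipF F y z\<bar> \<le> real (card F) * (M * M)"
    and "ipF F (y - z) (y - z) \<le> real (card F) * ((2*M) * (2*M))"
proof -
  have "\<bar>ipF F y z\<bar> \<le> (\<Sum>f\<in>F. \<bar>f y * f z\<bar>)" unfolding ipF_def by (rule sum_abs)
  also have "\<dots> \<le> real (card F) * (M * M)"
  proof (rule sum_bounded_above)
    fix f assume "f \<in> F"
    then have "\<bar>f y\<bar> \<le> M" "\<bar>f z\<bar> \<le> M" using assms by auto
    then show "\<bar>f y * f z\<bar> \<le> M * M" unfolding abs_mult by (simp add: mult_mono')
  qed
  finally show "\<bar>ipF F y z\<bar> \<le> real (card F) * (M * M)" .
  show "ipF F (y - z) (y - z) \<le> real (card F) * ((2*M) * (2*M))"
    unfolding ipF_def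
  proof (rule sum_bounded_above)
    fix f assume "f \<in> F"
    then have "\<bar>f y\<bar> \<le> M" "\<bar>f z\<bar> \<le> M" "f (y - z) = f y - f z" using assms bl_diff[of f y z] by auto
    then have "\<bar>f (y - z)\<bar> \<le> 2 * M" by simp
    then have "\<bar>f (y - z)\<bar> * \<bar>f (y - z)\<bar> \<le> (2*M) * (2*M)" by (intro mult_mono') auto
    moreover have "f (y - z) * f (y - z) = \<bar>f (y - z)\<bar> * \<bar>f (y - z)\<bar>" by (simp add: abs_mult[symmetric])
    ultimately show "f (y - z) * f (y - z) \<le> (2*M) * (2*M)" by linarith
  qed
qed

lemma hstep:
  fixes A :: "'a::real_normed_vector set"
  assumes Ane: "A \<noteq> {}" and bA: "bounded A" and fF: "finite F" and blF: "\<forall>f\<in>F. bounded_linear f"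
    and d: "0 < \<delta>" and tau: "\<tau> \<ge> 0"
  shows "\<exists>e\<in>A. (\<exists>g \<eta>. bounded_linear g \<and> \<eta> > 0 \<and> (\<forall>y\<in>slice A g \<eta>. ipF F (y - e) (y - e) < \<delta>\<^sup>2))
      \<and> (\<forall>z\<in>A. \<tau> * ipF F w z + ipF F z z / 2 < \<tau> * ipF F w e + ipF F e e / 2 + \<delta>\<^sup>2/4)"
proof -
  obtain M where M: "M \<ge> 0" "\<forall>f\<in>F. \<forall>y\<in>A. \<bar>f y\<bar> \<le> M" using bounded_funcs_on[OF bA fF blF] by blast
  have blw: "bounded_linear (ipF F w)" by (rule ipF_bl[OF blF])
  have "bounded (ipF F w ` A)" using bounded_linear_image[OF bA blw] .
  then obtain K1 where K1: "\<forall>x\<in>ipF F w ` A. norm x \<le> K1" unfolding bounded_iff by blast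
  define h where "h y = \<tau> * ipF F w y + ipF F y y / 2" for y
  have hb: "h y \<le> \<tau> * K1 + real (card F) * (M * M) / 2" if "y \<in> A" for y
  proof -
    have "ipF F w y \<le> K1" using K1 that by force
    then have "\<tau> * ipF F w y \<le> \<tau> * K1" using tau by (rule mult_left_mono)
    moreover have "ipF F y y \<le> real (card F) * (M * M)" using ipF_bound_on(1)[OF blF M that that] by simp
    ultimately show ?thesis unfolding h_def by simp
  qed
  have bddh: "bdd_above (h ` A)" using hb unfolding bdd_above_def by blast
  have hne: "h ` A \<noteq> {}" using Ane by simp
  have "Sup (h ` A) - \<delta>\<^sup>2/4 < Sup (h ` A)" using d by simp
  then obtain e where e: "e \<in> A" "Sup (h ` A) - \<delta>\<^sup>2/4 < h e"
    using less_cSup_iff[OF hne bddh] by blast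
  have hle: "h y \<le> Sup (h ` A)" if "y \<in> A" for y using cSup_upper[OF _ bddh] that by simp
  define l where "l y = \<tau> * ipF F w y + ipF F e y" for y
  have bll: "bounded_linear l" unfolding l_def
    by (rule bounded_linear_add[OF bl_mult_left[OF blw] ipF_bl[OF blF]])
  have "bounded (l ` A)" using bounded_linear_image[OF bA bll] .
  then have bddl: "bdd_above (l ` A)" by (rule bounded_imp_bdd_above)
  have lle: "l e \<le> Sup (l ` A)" using cSup_upper[OF _ bddl] e(1) by simp
  define \<eta> where "\<eta> = Sup (l ` A) - l e + \<delta>\<^sup>2/4"
  have "\<delta>\<^sup>2 > 0" using d by simp
  then have eta: "\<eta> > 0" using lle unfolding \<eta>_def by linarith
  have sl: "ipF F (y - e) (y - e) < \<delta>\<^sup>2" if "y \<in> slice A l \<eta>" for y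
  proof -
    have y: "y \<in> A" "l y > Sup (l ` A) - \<eta>" using that unfolding slice_def by auto
    then have ly: "l y > l e - \<delta>\<^sup>2/4" unfolding \<eta>_def by simp
    have "h y < h e + \<delta>\<^sup>2/4" using hle[OF y(1)] e(2) by simp
    then show ?thesis using ly ipF_expand[OF blF, of y e] ipF_sym[of F y e]
      unfolding h_def l_def by simp
  qed
  show ?thesis
  proof (intro bexI conjI)
    show "\<exists>g \<eta>. bounded_linear g \<and> \<eta> > 0 \<and> (\<forall>y\<in>slice A g \<eta>. ipF F (y - e) (y - e) < \<delta>\<^sup>2)"
      using bll eta sl by blast
    show "\<forall>z\<in>A. \<tau> * ipF F w z + ipF F z z / 2 < \<tau> * ipF F w e + ipF F e e / 2 + \<delta>\<^sup>2/4"
      using hle e(2) unfolding h_def by fastforce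
  qed (use e in auto)
qed

lemma near_hull:
  fixes A :: "'a::real_normed_vector set"
  assumes cA: "convex A" and bA: "bounded A" and x0: "x0 \<in> A" and fF: "finite F"
    and blF: "\<forall>f\<in>F. bounded_linear f" and d: "0 < \<delta>"
  defines "E \<equiv> {e\<in>A. \<exists>g \<eta>. bounded_linear g \<and> \<eta> > 0 \<and> (\<forall>y\<in>slice A g \<eta>. ipF F (y - e) (y - e) < \<delta>\<^sup>2)}"
  shows "\<exists>c\<in>convex hull E. ipF F (x0 - c) (x0 - c) < \<delta>\<^sup>2"
proof (rule ccontr)
  assume "\<not> ?thesis"
  then have H: "\<And>c. c \<in> convex hull E \<Longrightarrow> \<delta>\<^sup>2 \<le> ipF F (x0 - c) (x0 - c)" by (meson not_less)
  have Ane: "A \<noteq> {}" using x0 by auto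
  obtain M where M: "M \<ge> 0" "\<forall>f\<in>F. \<forall>y\<in>A. \<bar>f y\<bar> \<le> M" using bounded_funcs_on[OF bA fF blF] by blast
  define R where "R = real (card F) * ((2*M) * (2*M))"
  define S where "S = real (card F) * (M * M)"
  have R0: "R \<ge> 0" "S \<ge> 0" unfolding R_def S_def using M by auto
  have hs: "\<exists>e\<in>E. \<forall>z\<in>A. \<tau> * ipF F w z + ipF F z z / 2 < \<tau> * ipF F w e + ipF F e e / 2 + \<delta>\<^sup>2/4"
    if "\<tau> \<ge> 0" for w \<tau>
    using hstep[OF Ane bA fF blF d that, of w] unfolding E_def by blast
  have EA: "E \<subseteq> A" unfolding E_def by auto
  have Ene: "E \<noteq> {}" using hs[of 0 0] by auto
  have cEA: "convex hull E \<subseteq> A" by (rule hull_minimal[where S=convex, OF EA cA])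
  define D where "D = (\<lambda>c. ipF F (x0 - c) (x0 - c)) ` (convex hull E)"
  have Dne: "D \<noteq> {}" using Ene hull_subset[of E convex] unfolding D_def by auto
  have bddD: "bdd_below D" unfolding D_def bdd_below_def using ipF_nonneg by (intro exI[of _ 0]) auto
  define d2 where "d2 = Inf D"
  have d2ge: "\<delta>\<^sup>2 \<le> d2" unfolding d2_def by (rule cInf_greatest[OF Dne]) (use H in \<open>auto simp: D_def\<close>)
  have dsq: "\<delta>\<^sup>2 > 0" using d by simp
  have d2pos: "d2 > 0" using d2ge dsq by linarith
  have dlow: "d2 \<le> ipF F (x0 - c) (x0 - c)" if "c \<in> convex hull E" for c
    unfolding d2_def by (rule cInf_lower[OF _ bddD]) (use that in \<open>auto simp: D_def\<close>)
  define t where "t = min 1 (d2 / (4 * (R + 1)))"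
  have t12: "0 < t" "t \<le> 1" using d2pos R0 unfolding t_def by auto
  have "t \<le> d2 / (4 * (R + 1))" unfolding t_def by simp
  then have "t * (R + 1) \<le> d2 / (4 * (R + 1)) * (R + 1)" using R0 by (intro mult_right_mono) auto
  also have "\<dots> = d2 / 4" using R0 by (simp add: field_simps)
  finally have t: "0 < t" "t \<le> 1" "t * (R + 1) \<le> d2 / 4" using t12 by auto
  have tR: "t * R \<le> d2 / 4" using t R0 by (simp add: algebra_simps)
  define \<eta> where "\<eta> = t * d2 / 4"
  have eta: "\<eta> > 0" using t d2pos unfolding \<eta>_def by simp
  have "Inf D < d2 + \<eta>" using eta unfolding d2_def by simp
  then obtain c where c: "c \<in> convex hull E" "ipF F (x0 - c) (x0 - c) < d2 + \<eta>"
    using cInf_less_iff[OF Dne bddD] unfolding D_def by auto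
  define w where "w = x0 - c"
  have key: "ipF F w c' < ipF F w x0 - 3 * d2 / 4" if c': "c' \<in> convex hull E" for c'
  proof -
    define v where "v = c' - c"
    define ct where "ct = (1 - t) *\<^sub>R c + t *\<^sub>R c'"
    have ct: "ct \<in> convex hull E" unfolding ct_def
      by (rule convexD[OF convex_convex_hull c(1) c']) (use t in auto)
    have "x0 - ct = w - t *\<^sub>R v" unfolding ct_def w_def v_def by (simp add: algebra_simps)
    then have "d2 \<le> ipF F (w - t *\<^sub>R v) (w - t *\<^sub>R v)" using dlow[OF ct] by simp
    also have "\<dots> = ipF F w w - 2 * (t * ipF F w v) + t * (t * ipF F v v)"
      using ipF_expand[OF blF, of w "t *\<^sub>R v"] ipF_scale_right[OF blF] ipF_scale_left[OF blF] by simp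
    finally have 1: "d2 \<le> ipF F w w - 2 * (t * ipF F w v) + t * (t * ipF F v v)" .
    have "ipF F v v \<le> R" unfolding v_def R_def
      using ipF_bound_on(2)[OF blF M] c(1) c' cEA by blast
    then have "t * ipF F v v \<le> t * R" using t by (simp add: mult_left_mono)
    then have "t * (t * ipF F v v) \<le> t * (d2/4)" using tR t by (meson less_eq_real_def mult_left_mono order_trans)
    then have "t * (2 * ipF F w v) < t * (d2 / 2)" using 1 c(2) unfolding w_def \<eta>_def by (simp add: algebra_simps)
    then have 2: "ipF F w v < d2 / 4" using t(1) by simp
    have "x0 - c' = w - v" unfolding w_def v_def by simp
    then have "ipF F w x0 - ipF F w c' = ipF F w w - ipF F w v"
      using ipF_diff_right[OF blF, of w x0 c'] ipF_diff_right[OF blF, of w w v] by simp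
    moreover have "d2 \<le> ipF F w w" using dlow[OF c(1)] unfolding w_def .
    ultimately show ?thesis using 2 by simp
  qed
  define \<tau> where "\<tau> = (S + \<delta>\<^sup>2) / d2 + 1"
  have tau: "\<tau> \<ge> 0" using R0 d2pos dsq unfolding \<tau>_def by simp
  obtain e where e: "e \<in> E" "\<forall>z\<in>A. \<tau> * ipF F w z + ipF F z z / 2 < \<tau> * ipF F w e + ipF F e e / 2 + \<delta>\<^sup>2/4"
    using hs[OF tau, of w] by blast
  have X: "3 * d2 / 4 < ipF F w x0 - ipF F w e" using key[OF hull_inc[OF e(1)]] by simp
  have 3: "\<tau> * (ipF F w x0 - ipF F w e) < S / 2 + \<delta>\<^sup>2/4"
  proof -
    have "ipF F e e \<le> S" using ipF_bound_on(1)[OF blF M, of e e] e(1) EA unfolding S_def by auto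
    moreover have "0 \<le> ipF F x0 x0" by (rule ipF_nonneg)
    moreover have "\<tau> * ipF F w x0 + ipF F x0 x0 / 2 < \<tau> * ipF F w e + ipF F e e / 2 + \<delta>\<^sup>2/4"
      using e(2) x0 by blast
    ultimately show ?thesis by (simp add: algebra_simps)
  qed
  have "\<tau> * (3 * d2 / 4) \<le> \<tau> * (ipF F w x0 - ipF F w e)" using X tau by (intro mult_left_mono) auto
  moreover have "\<tau> * (3 * d2 / 4) = 3/4 * (S + \<delta>\<^sup>2 + d2)" unfolding \<tau>_def using d2pos by (simp add: field_simps)
  ultimately show False using 3 R0 dsq d2pos by (simp add: field_simps)
qed

lemma bourgain:
  fixes A :: "'a::real_normed_vector set" and F :: "('a \<Rightarrow> real) set"
  assumes cA: "convex A" and bA: "bounded A" and x0: "x0 \<in> A" and fF: "finite F"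
    and blF: "\<forall>f\<in>F. bounded_linear f" and ep: "0 < \<epsilon>"
    and U: "{y\<in>A. \<forall>f\<in>F. \<bar>f y - f x0\<bar> < \<epsilon>} \<subseteq> U"
  shows "\<exists>(S::'a set) g \<eta> u. finite S \<and> (\<forall>e\<in>S. bounded_linear (g e) \<and> \<eta> e > 0 \<and> u e \<ge> 0) \<and> sum u S = 1 \<and>
     (\<forall>y. (\<forall>e\<in>S. y e \<in> slice A (g e) (\<eta> e)) \<longrightarrow> (\<Sum>e\<in>S. u e *\<^sub>R y e) \<in> U)"
proof -
  define \<delta> where "\<delta> = \<epsilon> / 2"
  have d: "0 < \<delta>" using ep unfolding \<delta>_def by simp
  define E where "E = {e\<in>A. \<exists>g \<eta>. bounded_linear g \<and> \<eta> > 0 \<and> (\<forall>y\<in>slice A g \<eta>. ipF F (y - e) (y - e) < \<delta>\<^sup>2)}"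
  obtain c where c: "c \<in> convex hull E" "ipF F (x0 - c) (x0 - c) < \<delta>\<^sup>2"
    using near_hull[OF cA bA x0 fF blF d] unfolding E_def by blast
  obtain S u where Su: "finite S" "S \<subseteq> E" "\<forall>x\<in>S. 0 \<le> u x" "sum u S = 1" "(\<Sum>v\<in>S. u v *\<^sub>R v) = c"
    using c(1) unfolding convex_hull_explicit by blast
  have "\<forall>e\<in>S. \<exists>g. \<exists>\<eta>. bounded_linear g \<and> \<eta> > 0 \<and> (\<forall>y\<in>slice A g \<eta>. ipF F (y - e) (y - e) < \<delta>\<^sup>2)"
    using Su(2) unfolding E_def by blast
  from bchoice[OF this] obtain g where "\<forall>e\<in>S. \<exists>\<eta>. bounded_linear (g e) \<and> \<eta> > 0 \<and> (\<forall>y\<in>slice A (g e) \<eta>. ipF F (y - e) (y - e) < \<delta>\<^sup>2)"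
    by blast
  from bchoice[OF this] obtain \<eta> where g: "\<forall>e\<in>S. bounded_linear (g e) \<and> \<eta> e > 0 \<and> (\<forall>y\<in>slice A (g e) (\<eta> e). ipF F (y - e) (y - e) < \<delta>\<^sup>2)"
    by blast
  have fin: "\<forall>y. (\<forall>e\<in>S. y e \<in> slice A (g e) (\<eta> e)) \<longrightarrow> (\<Sum>e\<in>S. u e *\<^sub>R y e) \<in> U"
  proof (intro allI impI)
    fix y assume y: "\<forall>e\<in>S. y e \<in> slice A (g e) (\<eta> e)"
    have yA: "y e \<in> A" if "e \<in> S" for e using y that unfolding slice_def by auto
    have inA: "(\<Sum>e\<in>S. u e *\<^sub>R y e) \<in> A"
      by (rule convex_sum[OF Su(1) cA Su(4)]) (use Su(3) yA in auto)
    have "\<bar>f (\<Sum>e\<in>S. u e *\<^sub>R y e) - f x0\<bar> < \<epsilon>" if fin: "f \<in> F" for f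
    proof -
      have blf: "bounded_linear f" using blF fin by blast
      have close: "\<bar>f (y e) - f e\<bar> < \<delta>" if "e \<in> S" for e
      proof -
        have "y e \<in> slice A (g e) (\<eta> e)" using y that by blast
        then have "ipF F (y e - e) (y e - e) < \<delta>\<^sup>2" using g that by blast
        then have "\<bar>f (y e - e)\<bar> < \<delta>" by (rule ipF_abs_less[OF fF fin _ d])
        then show ?thesis using bl_diff[OF blf] by simp
      qed
      have c2: "\<bar>f x0 - f c\<bar> < \<delta>"
        using ipF_abs_less[OF fF fin c(2) d] bl_diff[OF blf] by simp
      have fs: "f (\<Sum>e\<in>S. u e *\<^sub>R y e) = (\<Sum>e\<in>S. u e * f (y e))"
        using bl_sum[OF blf, of "\<lambda>e. u e *\<^sub>R y e" S] bl_scale[OF blf] by simp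
      have fc: "f c = (\<Sum>e\<in>S. u e * f e)"
        using bl_sum[OF blf, of "\<lambda>e. u e *\<^sub>R e" S] bl_scale[OF blf] Su(5)[symmetric] by simp
      have "\<bar>(\<Sum>e\<in>S. u e * f (y e)) - f c\<bar> = \<bar>\<Sum>e\<in>S. u e * (f (y e) - f e)\<bar>"
        unfolding fc by (simp add: sum_subtractf right_diff_distrib)
      also have "\<dots> \<le> (\<Sum>e\<in>S. \<bar>u e * (f (y e) - f e)\<bar>)" by (rule sum_abs)
      also have "\<dots> \<le> (\<Sum>e\<in>S. u e * \<delta>)"
      proof (rule sum_mono)
        fix e assume "e \<in> S"
        then show "\<bar>u e * (f (y e) - f e)\<bar> \<le> u e * \<delta>"
        proof -
          have "\<bar>u e * (f (y e) - f e)\<bar> = u e * \<bar>f (y e) - f e\<bar>" using Su(3) \<open>e \<in> S\<close> by (simp add: abs_mult)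
          also have "\<dots> \<le> u e * \<delta>" using close[OF \<open>e \<in> S\<close>] Su(3) \<open>e \<in> S\<close> by (intro mult_left_mono) auto
          finally show ?thesis .
        qed
      qed
      also have "\<dots> = (\<Sum>e\<in>S. u e) * \<delta>" by (rule sum_distrib_right[symmetric])
      also have "\<dots> = \<delta>" using Su(4) by simp
      finally have "\<bar>(\<Sum>e\<in>S. u e * f (y e)) - f c\<bar> \<le> \<delta>" .
      then show ?thesis using c2 fs unfolding \<delta>_def by linarith
    qed
    then show "(\<Sum>e\<in>S. u e *\<^sub>R y e) \<in> U" using U inA by (intro subsetD[OF U]) auto
  qed
  have props: "\<forall>e\<in>S. bounded_linear (g e) \<and> \<eta> e > 0 \<and> u e \<ge> 0" using g Su(3) by blast
  show ?thesis
    apply (rule exI[of _ S], rule exI[of _ g], rule exI[of _ \<eta>], rule exI[of _ u])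
    apply (intro conjI)
       apply (rule Su(1))
      apply (rule props)
     apply (rule Su(4))
    apply (rule fin)
    done
qed



lemma gen_nbhd:
  assumes "generate_topology_on {f -` V | f V. bounded_linear (f :: 'a::real_normed_vector \<Rightarrow> real) \<and> open V} U"
  shows "x \<in> U \<Longrightarrow> \<exists>F \<epsilon>. finite F \<and> (\<forall>f\<in>F. bounded_linear (f :: 'a \<Rightarrow> real)) \<and> \<epsilon> > 0 \<and>
            {y. \<forall>f\<in>F. \<bar>f y - f x\<bar> < \<epsilon>} \<subseteq> U"
  using assms
proof (induction arbitrary: x rule: generate_topology_on.induct)
  case Empty
  then show ?case by simp
next
  case (Int a b)
  obtain F1 :: "('a \<Rightarrow> real) set" and e1 :: real where 1: "finite F1" "\<forall>f\<in>F1. bounded_linear f" "e1 > 0" "{y. \<forall>f\<in>F1. \<bar>f y - f x\<bar> < e1} \<subseteq> a"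
    using Int.IH(1)[of x] Int.prems by blast
  obtain F2 :: "('a \<Rightarrow> real) set" and e2 :: real where 2: "finite F2" "\<forall>f\<in>F2. bounded_linear f" "e2 > 0" "{y. \<forall>f\<in>F2. \<bar>f y - f x\<bar> < e2} \<subseteq> b"
    using Int.IH(2)[of x] Int.prems by blast
  have "{y. \<forall>f\<in>F1 \<union> F2. \<bar>f y - f x\<bar> < min e1 e2} \<subseteq> a \<inter> b"
    using 1(4) 2(4) by auto
  moreover have "finite (F1 \<union> F2)" "\<forall>f\<in>F1 \<union> F2. bounded_linear f" "min e1 e2 > 0" using 1 2 by auto
  ultimately show ?case by (intro exI[of _ "F1 \<union> F2"] exI[of _ "min e1 e2"]) simp
next
  case (UN K)
  from UN.prems obtain k where k: "k \<in> K" "x \<in> k" by auto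
  then obtain F :: "('a \<Rightarrow> real) set" and e :: real where "finite F" "\<forall>f\<in>F. bounded_linear f" "e > 0" "{y. \<forall>f\<in>F. \<bar>f y - f x\<bar> < e} \<subseteq> k"
    using UN.IH[OF k] by blast
  then show ?case using \<open>k \<in> K\<close> by (intro exI[of _ F] exI[of _ e]) auto
next
  case (Basis s)
  from Basis.hyps have "\<exists>(f::'a \<Rightarrow> real) V. s = f -` V \<and> bounded_linear f \<and> open V" by simp
  then obtain f :: "'a \<Rightarrow> real" and V :: "real set" where fV: "s = f -` V" "bounded_linear f" "open V" by blast
  then have "f x \<in> V" using Basis.prems by auto
  then obtain e where e: "e > 0" "ball (f x) e \<subseteq> V" using fV(3) open_contains_ball by blast
  have "{y. \<forall>g\<in>{f}. \<bar>g y - g x\<bar> < e} \<subseteq> s"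
  proof
    fix y assume "y \<in> {y. \<forall>g\<in>{f}. \<bar>g y - g x\<bar> < e}"
    then have "\<bar>f y - f x\<bar> < e" by simp
    then have "f y \<in> ball (f x) e" unfolding mem_ball dist_real_def by linarith
    then show "y \<in> s" using e fV by auto
  qed
  then show ?case using fV(2) e(1) by (intro exI[of _ "{f}"] exI[of _ e]) auto
qed

lemma weak_nbhd:
  fixes A :: "'a::real_normed_vector set"
  assumes "openin (subtopology weak_topology A) U" "x \<in> U"
  shows "\<exists>F \<epsilon>. finite F \<and> (\<forall>f\<in>F. bounded_linear (f :: 'a \<Rightarrow> real)) \<and> \<epsilon> > 0 \<and>
            {y\<in>A. \<forall>f\<in>F. \<bar>f y - f x\<bar> < \<epsilon>} \<subseteq> U"
proof -
  obtain T where T: "openin weak_topology T" "U = T \<inter> A" using assms(1) unfolding openin_subtopology by blast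
  have "generate_topology_on {f -` V | f V. bounded_linear (f :: 'a \<Rightarrow> real) \<and> open V} T"
    using T(1) unfolding weak_topology_def openin_topology_generated_by_iff .
  then obtain F :: "('a \<Rightarrow> real) set" and \<epsilon> :: real where "finite F" "\<forall>f\<in>F. bounded_linear (f :: 'a \<Rightarrow> real)" "\<epsilon> > 0"
      "{y. \<forall>f\<in>F. \<bar>f y - f x\<bar> < \<epsilon>} \<subseteq> T"
    using gen_nbhd[of T x] assms(2) T(2) by auto
  then show ?thesis using T(2) by (intro exI[of _ F] exI[of _ \<epsilon>]) auto
qed

lemma weak_topspace: "topspace (weak_topology :: 'a::real_normed_vector topology) = UNIV"
proof -
  have "(\<lambda>x::'a. 0::real) -` UNIV \<in> {f -` V | f V. bounded_linear (f :: 'a \<Rightarrow> real) \<and> open V}"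
    by (intro CollectI exI[of _ "\<lambda>x::'a. 0::real"] exI[of _ UNIV]) auto
  then show ?thesis unfolding weak_topology_def topology_generated_by_topspace by auto
qed

lemma weak_open_halfspace:
  fixes A :: "'a::real_normed_vector set" and g :: "'a \<Rightarrow> real"
  assumes "bounded_linear g"
  shows "openin (subtopology weak_topology A) (A \<inter> g -` {..<c})"
proof -
  have "g -` {..<c} \<in> {f -` V | f V. bounded_linear (f :: 'a \<Rightarrow> real) \<and> open V}"
    using assms by (intro CollectI exI[of _ g] exI[of _ "{..<c}"]) auto
  then have "openin weak_topology (g -` {..<c})" unfolding weak_topology_def by (rule topology_generated_by_Basis)
  then show ?thesis unfolding openin_subtopology by blast
qed

theorem proposition2p21:
  fixes A :: "'a::banach set"
  assumes "convex A" and "bounded A"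
    and "has_countable_pi_base (subtopology weak_topology A)"
  shows "SCD_set A"
proof (cases "A = {}")
  case True
  show ?thesis unfolding SCD_set_def
    by (intro exI[of _ "\<lambda>n x. 0"] exI[of _ "\<lambda>n. 1"]) (simp add: True)
next
  case Ane: False
  note cA = assms(1) and bA = assms(2)
  let ?W = "subtopology weak_topology A"
  obtain P where P: "countable P" "pi_base ?W P"
    using assms(3) unfolding has_countable_pi_base_def by blast
  have Popen: "openin ?W U" "U \<noteq> {}" if "U \<in> P" for U using P(2) that unfolding pi_base_def by auto
  have Pbase: "\<exists>U\<in>P. U \<subseteq> V" if "openin ?W V" "V \<noteq> {}" for V
    using P(2) that unfolding pi_base_def by blast
  have openA: "openin ?W A" unfolding openin_subtopology_refl weak_topspace by simp
  have UA: "U \<subseteq> A" if "openin ?W U" for U using that unfolding openin_subtopology by auto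
  have "\<forall>U\<in>P. \<exists>(S::'a set) g \<eta> u. finite S \<and> (\<forall>e\<in>S. bounded_linear (g e) \<and> \<eta> e > 0 \<and> u e \<ge> 0) \<and> sum u S = 1 \<and>
     (\<forall>y. (\<forall>e\<in>S. y e \<in> slice A (g e) (\<eta> e)) \<longrightarrow> (\<Sum>e\<in>S. u e *\<^sub>R y e) \<in> U)"
  proof
    fix U assume U: "U \<in> P"
    then obtain x0 where x0: "x0 \<in> U" using Popen by blast
    have x0A: "x0 \<in> A" using UA[OF Popen(1)[OF U]] x0 by blast
    obtain F :: "('a \<Rightarrow> real) set" and \<epsilon> :: real where F: "finite F" "\<forall>f\<in>F. bounded_linear f" "\<epsilon> > 0"
      "{y\<in>A. \<forall>f\<in>F. \<bar>f y - f x0\<bar> < \<epsilon>} \<subseteq> U"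
      using weak_nbhd[OF Popen(1)[OF U] x0] by blast
    show "\<exists>(S::'a set) g \<eta> u. finite S \<and> (\<forall>e\<in>S. bounded_linear (g e) \<and> \<eta> e > 0 \<and> u e \<ge> 0) \<and> sum u S = 1 \<and>
     (\<forall>y. (\<forall>e\<in>S. y e \<in> slice A (g e) (\<eta> e)) \<longrightarrow> (\<Sum>e\<in>S. u e *\<^sub>R y e) \<in> U)"
      by (rule bourgain[OF cA bA x0A F(1) F(2) F(3) F(4)])
  qed
  from bchoice[OF this] obtain SS :: "'a set \<Rightarrow> 'a set" where "\<forall>U\<in>P. \<exists>g \<eta> u. finite (SS U) \<and> (\<forall>e\<in>SS U. bounded_linear (g e) \<and> \<eta> e > 0 \<and> u e \<ge> 0) \<and> sum u (SS U) = 1 \<and>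
     (\<forall>y. (\<forall>e\<in>SS U. y e \<in> slice A (g e) (\<eta> e)) \<longrightarrow> (\<Sum>e\<in>SS U. u e *\<^sub>R y e) \<in> U)" by blast
  from bchoice[OF this] obtain GG :: "'a set \<Rightarrow> 'a \<Rightarrow> 'a \<Rightarrow> real" where "\<forall>U\<in>P. \<exists>\<eta> u. finite (SS U) \<and> (\<forall>e\<in>SS U. bounded_linear (GG U e) \<and> \<eta> e > 0 \<and> u e \<ge> 0) \<and> sum u (SS U) = 1 \<and>
     (\<forall>y. (\<forall>e\<in>SS U. y e \<in> slice A (GG U e) (\<eta> e)) \<longrightarrow> (\<Sum>e\<in>SS U. u e *\<^sub>R y e) \<in> U)" by blast
  from bchoice[OF this] obtain HH :: "'a set \<Rightarrow> 'a \<Rightarrow> real" where "\<forall>U\<in>P. \<exists>u. finite (SS U) \<and> (\<forall>e\<in>SS U. bounded_linear (GG U e) \<and> HH U e > 0 \<and> u e \<ge> 0) \<and> sum u (SS U) = 1 \<and>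
     (\<forall>y. (\<forall>e\<in>SS U. y e \<in> slice A (GG U e) (HH U e)) \<longrightarrow> (\<Sum>e\<in>SS U. u e *\<^sub>R y e) \<in> U)" by blast
  from bchoice[OF this] obtain LL :: "'a set \<Rightarrow> 'a \<Rightarrow> real" where LL: "\<forall>U\<in>P. finite (SS U) \<and> (\<forall>e\<in>SS U. bounded_linear (GG U e) \<and> HH U e > 0 \<and> LL U e \<ge> 0) \<and> sum (LL U) (SS U) = 1 \<and>
     (\<forall>y. (\<forall>e\<in>SS U. y e \<in> slice A (GG U e) (HH U e)) \<longrightarrow> (\<Sum>e\<in>SS U. LL U e *\<^sub>R y e) \<in> U)" by blast
  define T where "T = Sigma P SS"
  have cT: "countable T" unfolding T_def
    by (rule countable_SIGMA[OF P(1)]) (use LL countable_finite in blast)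
  obtain U0 where U0: "U0 \<in> P" using Pbase[OF openA Ane] by blast
  have "SS U0 \<noteq> {}" using LL U0 by (metis sum.empty zero_neq_one)
  then have Tne: "T \<noteq> {}" using U0 unfolding T_def by auto
  define pk where "pk k = from_nat_into T k" for k
  have pkT: "pk k \<in> T" for k unfolding pk_def by (rule from_nat_into[OF Tne])
  define f where "f k = GG (fst (pk k)) (snd (pk k))" for k
  define e where "e k = HH (fst (pk k)) (snd (pk k))" for k
  show ?thesis unfolding SCD_set_def
  proof (intro exI[of _ f] exI[of _ e] conjI allI impI)
    fix n
    have "fst (pk n) \<in> P" "snd (pk n) \<in> SS (fst (pk n))" using pkT[of n] unfolding T_def by auto
    then show "bounded_linear (f n)" unfolding f_def using LL by blast
  next
    fix n
    have "fst (pk n) \<in> P" "snd (pk n) \<in> SS (fst (pk n))" using pkT[of n] unfolding T_def by auto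
    then show "e n > 0" unfolding e_def using LL by blast
  next
    fix B assume B: "B \<subseteq> A \<and> (\<forall>n. B \<inter> slice A (f n) (e n) \<noteq> {})"
    have meetsl: "B \<inter> slice A (GG U x) (HH U x) \<noteq> {}" if UX: "U \<in> P" "x \<in> SS U" for U x
    proof -
      obtain n where "pk n = (U, x)" using from_nat_into_surj[OF cT, of "(U, x)"] UX unfolding pk_def T_def by auto
      then show ?thesis using B unfolding f_def e_def by (metis fst_conv snd_conv)
    qed
    have meetsP: "convex hull B \<inter> U \<noteq> {}" if U: "U \<in> P" for U
    proof -
      define y where "y x = (SOME b. b \<in> B \<inter> slice A (GG U x) (HH U x))" for x
      have y: "y x \<in> B \<inter> slice A (GG U x) (HH U x)" if "x \<in> SS U" for x
        unfolding y_def by (rule someI_ex) (use meetsl[OF U that] in auto)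
      have LLU: "finite (SS U)" "\<forall>x\<in>SS U. LL U x \<ge> 0" "sum (LL U) (SS U) = 1"
        "(\<forall>e\<in>SS U. y e \<in> slice A (GG U e) (HH U e)) \<longrightarrow> (\<Sum>e\<in>SS U. LL U e *\<^sub>R y e) \<in> U"
        using LL U by auto
      have "(\<Sum>e\<in>SS U. LL U e *\<^sub>R y e) \<in> U" using LLU(4) y by blast
      moreover have "(\<Sum>e\<in>SS U. LL U e *\<^sub>R y e) \<in> convex hull B"
        by (rule convex_sum[OF LLU(1) convex_convex_hull LLU(3)]) (use LLU(2) y in \<open>auto intro: hull_inc\<close>)
      ultimately show ?thesis by blast
    qed
    have meetsV: "convex hull B \<inter> V \<noteq> {}" if VV: "openin ?W V" "V \<noteq> {}" for V
    proof -
      obtain U where "U \<in> P" "U \<subseteq> V" using Pbase[OF VV] by blast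
      then show ?thesis using meetsP by blast
    qed
    show "A \<subseteq> closure (convex hull B)"
    proof
      fix x assume xA: "x \<in> A"
      show "x \<in> closure (convex hull B)"
      proof (rule ccontr)
        assume "x \<notin> closure (convex hull B)"
        then obtain r where r: "r > 0" "\<forall>y\<in>convex hull B. \<not> dist y x < r"
          unfolding closure_approachable by blast
        have Cne: "convex hull B \<noteq> {}" using meetsV[OF openA Ane] by blast
        obtain g where g: "bounded_linear g" "\<forall>c\<in>convex hull B. g x + r \<le> g c"
          using HB_separation[OF convex_convex_hull Cne r(1), of x] r(2) by (auto simp: dist_norm not_less)
        have "openin ?W (A \<inter> g -` {..<g x + r})" by (rule weak_open_halfspace[OF g(1)])
        moreover have "x \<in> A \<inter> g -` {..<g x + r}" using xA r(1) by simp
        ultimately have "convex hull B \<inter> (A \<inter> g -` {..<g x + r}) \<noteq> {}" using meetsV by blast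
        then obtain c where "c \<in> convex hull B" "g c < g x + r" by auto
        then show False using g(2) by fastforce
      qed
    qed
  qed
qed


end
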